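(* Let $\underline\delta\ge1$ be an integer and $\pi$ the switching policy $(0,\underline\delta)$ (transmit in $(0,0,0)$, in every state $(1,0,\delta)$, $\delta\ge1$, and in $(0,1,\delta)$ for $\delta\ge\underline\delta$). Define $a_1=\frac{pp_f}{1-\bar qp_f}$, $A=\frac{p}{\bar q(1-\bar qp_f)}$, $B=\frac{q\bar p^{\underline\delta-1}}{1-\bar pp_f}$, $b_1=\frac{q(1-\bar p^{\underline\delta-1})}{1-\bar p}+B$, $D=(1+a_1)\bar pB+(1+b_1)\bar qA$. Then the stationary distribution of $\{S_t\}$ under $\pi$ is $\nu_{0,0,0}=\bar pB/D$, $\nu_{1,1,0}=\bar qA/D$, $\nu_{1,0,k}=pp_f(\bar qp_f)^{k-1}\nu_{0,0,0}$ for $k\ge1$, $\nu_{0,1,k}=q\bar p^{k-1}\nu_{1,1,0}$ for $1\le k\le\underline\delta$ and $\nu_{0,1,k}=q\bar p^{\underline\delta-1}(\bar pp_f)^{k-\underline\delta}\nu_{1,1,0}$ for $k>\underline\delta$. Moreover, $$\mathcal L(\pi)=\frac{\beta pp_f\nu_{0,0,0}}{(1-\bar qp_f)^2}+(1-\beta)q\,\psi(\bar p,\underline\delta)\,\nu_{1,1,0}+\lambda\big((1+a_1)\nu_{0,0,0}+B\nu_{1,1,0}\big),$$ where $\psi(x,y)=\frac{1-(x+(1-x)y)x^{y-1}}{(1-x)^2}+\frac{(xp_f+(1-xp_f)y)x^{y-1}}{(1-xp_f)^2}$.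
   Context: Fix $p,q\in(0,1)$, $\bar p=1-p$, $\bar q=1-q$. The source $\{X_t\}$ is a Markov chain on $\{0,1\}$ with $\Pr[X_{t+1}=1\mid X_t=0]=p$, $\Pr[X_{t+1}=0\mid X_t=1]=q$; channel i.i.d. Bernoulli with success probability $p_s\in(0,1]$, independent of the source, $p_f=1-p_s$. Estimate dynamics: if $A_t=1$ and the transmission succeeds then $\hat X_{t+1}=X_{t+1}$, otherwise $\hat X_{t+1}=\hat X_t$. Age: $\Delta_{t+1}=\Delta_t+1$ if $X_{t+1}\ne\hat X_{t+1}$, else $0$. State $S_t=(X_t,\hat X_t,\Delta_t)\in\mathcal S=\{(0,0,0),(1,1,0)\}\cup\{(1,0,\delta),(0,1,\delta):\delta\ge1\}$, $S_1=(0,0,0)$; $\nu_{i,j,\delta}$ is the stationary probability of $(i,j,\delta)$. Per-state cost $c(s)=\beta\delta$ for $s=(1,0,\delta)$, $(1-\beta)\delta$ for $s=(0,1,\delta)$, $0$ for synced states, $\beta\in[0,1]$; per-stage cost $\ell(s,a)=\mathbb E[c(S_{t+1})\mid S_t=s,A_t=a]+\lambda\mathbb 1\{a=1\}$, $\lambda\ge0$; average cost $\mathcal L(\pi)=\limsup_{T\to\infty}\frac1T\sum_{t=1}^T\mathbb E^\pi[\ell(S_t,A_t)\mid S_1=(0,0,0)]$. The switching policy $(\bar\delta,\underline\delta)$ ($\bar\delta,\underline\delta\ge0$ integers) transmits iff $S_t=(1,0,\delta)$ with $\delta\ge\bar\delta$, or $S_t=(0,1,\delta)$ with $\delta\ge\underline\delta$,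 or ($\bar\delta=0$ and $S_t=(0,0,0)$), or ($\underline\delta=0$ and $S_t=(1,1,0)$). *)

theory Defs
  imports "HOL-Analysis.Analysis"
begin

text \<open>States are triples (X, Xhat, Delta) of naturals; the valid state space is SS.\<close>
type_synonym state = "nat \<times> nat \<times> nat"

definition SS :: "state set" where
  "SS = {(0,0,0), (1,1,0)} \<union> {(1,0,d) | d. d \<ge> 1} \<union> {(0,1,d) | d. d \<ge> 1}"

definition src :: "real \<Rightarrow> real \<Rightarrow> nat \<Rightarrow> nat \<Rightarrow> real" where
  "src p q x y = (if x = 0 then (if y = 1 then p else 1 - p) else (if y = 0 then q else 1 - q))"

definition age_upd :: "nat \<Rightarrow> nat \<Rightarrow> nat \<Rightarrow> nat" where
  "age_upd y xh d = (if y \<noteq> xh then d + 1 else 0)"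

text \<open>Controlled transition kernel Pr[S_{t+1} = s' | S_t = s, A_t = a];
  a = True means transmit; ps is the channel success probability.\<close>
definition trans :: "real \<Rightarrow> real \<Rightarrow> real \<Rightarrow> state \<Rightarrow> bool \<Rightarrow> state \<Rightarrow> real" where
  "trans p q ps s a s' = (case s of (x, xh, d) \<Rightarrow>
     (\<Sum>y\<in>{0::nat,1}. src p q x y *
        (if a then ps * (if s' = (y, y, 0) then 1 else 0)
                   + (1 - ps) * (if s' = (y, xh, age_upd y xh d) then 1 else 0)
         else (if s' = (y, xh, age_upd y xh d) then 1 else 0))))"

definition switching :: "nat \<Rightarrow> nat \<Rightarrow> state \<Rightarrow> bool" where
  "switching db du s = (case s of (x, xh, d) \<Rightarrow>
     (x = 1 \<and> xh = 0 \<and> d \<ge> db) \<or> (x = 0 \<and> xh = 1 \<and> d \<ge> du)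
     \<or> (db = 0 \<and> s = (0,0,0)) \<or> (du = 0 \<and> s = (1,1,0)))"

definition cst :: "real \<Rightarrow> state \<Rightarrow> real" where
  "cst \<beta> s = (case s of (x, xh, d) \<Rightarrow>
     (if x = 1 \<and> xh = 0 then \<beta> * real d
      else if x = 0 \<and> xh = 1 then (1 - \<beta>) * real d else 0))"

definition stage_cost :: "real \<Rightarrow> real \<Rightarrow> real \<Rightarrow> real \<Rightarrow> real \<Rightarrow> state \<Rightarrow> bool \<Rightarrow> real" where
  "stage_cost p q ps \<beta> lam s a =
     (\<Sum>\<^sub>\<infinity>s'\<in>SS. trans p q ps s a s' * cst \<beta> s') + lam * (if a then 1 else 0)"

text \<open>Distribution of S_{n+1} under stationary deterministic policy pol, with S_1 = (0,0,0).\<close>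
fun state_dist :: "real \<Rightarrow> real \<Rightarrow> real \<Rightarrow> (state \<Rightarrow> bool) \<Rightarrow> nat \<Rightarrow> state \<Rightarrow> real" where
  "state_dist p q ps pol 0 s = (if s = (0,0,0) then 1 else 0)"
| "state_dist p q ps pol (Suc n) s' =
     (\<Sum>\<^sub>\<infinity>s\<in>SS. state_dist p q ps pol n s * trans p q ps s (pol s) s')"

definition avg_cost :: "real \<Rightarrow> real \<Rightarrow> real \<Rightarrow> real \<Rightarrow> real \<Rightarrow> (state \<Rightarrow> bool) \<Rightarrow> ereal" where
  "avg_cost p q ps \<beta> lam pol = limsup (\<lambda>T::nat. ereal ((1 / real T) *
      (\<Sum>t=1..T. \<Sum>\<^sub>\<infinity>s\<in>SS. state_dist p q ps pol (t - 1) s * stage_cost p q ps \<beta> lam s (pol s))))"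

definition stationary :: "real \<Rightarrow> real \<Rightarrow> real \<Rightarrow> (state \<Rightarrow> bool) \<Rightarrow> (state \<Rightarrow> real) \<Rightarrow> bool" where
  "stationary p q ps pol \<nu> \<longleftrightarrow>
     (\<forall>s\<in>SS. \<nu> s \<ge> 0) \<and> (\<nu> has_sum 1) SS \<and>
     (\<forall>s'\<in>SS. ((\<lambda>s. \<nu> s * trans p q ps s (pol s) s') has_sum \<nu> s') SS)"

definition psi :: "real \<Rightarrow> real \<Rightarrow> nat \<Rightarrow> real" where
  "psi pf x y = (1 - (x + (1 - x) * real y) * x ^ (y - 1)) / (1 - x)^2
     + ((x * pf + (1 - x * pf) * real y) * x ^ (y - 1)) / (1 - x * pf)^2"

end

theory Submission
  imports Defs
begin

lemma key_alg:
  fixes p q ps \<beta> lam n X aX AA BB bX DD nA nB PS GG gam FF uu gam' al' bb aa :: real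
  assumes p0: "0 < p" and p1: "p < 1" and q0: "0 < q" and q1: "q < 1" and ps0: "0 < ps" and ps1: "ps \<le> 1"
  and r1: "1 - (1 - q) * (1 - ps) \<noteq> 0" and rp1: "1 - (1 - p) * (1 - ps) \<noteq> 0"
  and aX: "aX = p * (1 - ps) / (1 - (1 - q) * (1 - ps))"
  and AA: "AA = p / ((1 - q) * (1 - (1 - q) * (1 - ps)))"
  and BB: "BB = q * X / (1 - (1 - p) * (1 - ps))"
  and bX: "bX = q * (1 - X) / (1 - (1 - p)) + BB"
  and DD: "DD = (1 + aX) * (1 - p) * BB + (1 + bX) * (1 - q) * AA"
  and DD0: "DD \<noteq> 0"
  and nA: "nA = (1 - p) * BB / DD" and nB: "nB = (1 - q) * AA / DD"
  and PS: "PS = (1 - ((1 - p) + (1 - (1 - p)) * n) * X) / (1 - (1 - p))^2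
     + (((1 - p) * (1 - ps) + (1 - (1 - p) * (1 - ps)) * n) * X) / (1 - (1 - p) * (1 - ps))^2"
  and GG: "GG = \<beta> * p * (1 - ps) * nA / (1 - (1 - q) * (1 - ps))^2 + (1 - \<beta>) * q * PS * nB + lam * ((1 + aX) * nA + BB * nB)"
  and gam: "gam = (1 - q) * (1 - ps) * \<beta> / (1 - (1 - q) * (1 - ps))"
  and FF: "FF = \<beta> * p * (1 - ps) + lam + p * (1 - ps) * ((1 - q) * (1 - ps) * \<beta> + gam + lam) / (1 - (1 - q) * (1 - ps))"
  and uu: "uu = (GG * (1 - (1 - q) * (1 - ps) + p * (1 - ps)) - FF * (1 - (1 - q) * (1 - ps))) / (p * ps)"
  and gam': "gam' = (1 - p) * (1 - ps) * (1 - \<beta>) / (1 - (1 - p) * (1 - ps))"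
  and al': "al' = ((1 - p) * (1 - ps) * (1 - \<beta>) + (1 - p) * (1 - ps) * gam' + lam + p * uu - GG) / (1 - (1 - p) * (1 - ps))"
  and bb: "bb = (1 - p) * (1 - \<beta>) / p"
  and aa: "aa = (bb + p * uu - GG) / p"
  shows "q * (1 - \<beta>) = GG + uu - q * (aa + bb + (al' + gam' * n - aa - bb * n) * X) - (1 - q) * uu"
proof -
  define r where "r = (1 - q) * (1 - ps)"
  define rp where "rp = (1 - p) * (1 - ps)"
  have r1': "1 - r \<noteq> 0" and rp1': "1 - rp \<noteq> 0" using r1 rp1 by (auto simp: r_def rp_def)
  have pn: "p \<noteq> 0" and psn: "ps \<noteq> 0" and qn: "1 - q \<noteq> 0" using p0 ps0 q1 by auto
  define T where "T = GG / p - uu"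
  define E' where "E' = (rp * (1 - \<beta>) + rp * gam' + lam) / (1 - rp) + gam' * n - bb / p - bb * n"
  have S1: "aa + bb = bb / p + bb - T" unfolding aa T_def using pn by (simp add: field_simps)
  have S2: "al' + gam' * n - aa - bb * n = ((1 - p) * ps / (1 - rp)) * T + E'"
  proof -
    have e1: "al' = (rp * (1 - \<beta>) + rp * gam' + lam) / (1 - rp) + (p * uu - GG) / (1 - rp)"
      unfolding al' rp_def by (simp add: add_divide_distrib[symmetric] algebra_simps)
    have e2: "aa = bb / p + uu - GG / p" unfolding aa using pn by (simp add: field_simps)
    have e3: "(p * uu - GG) / (1 - rp) - uu + GG / p = ((1 - p) * ps / (1 - rp)) * T"
    proof -
      have "(p * uu - GG) / (1 - rp) - uu + GG / p = ((p * uu - GG) * p - uu * (1 - rp) * p + GG * (1 - rp)) / ((1 - rp) * p)"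
        using pn rp1' by (simp add: field_simps)
      also have "(p * uu - GG) * p - uu * (1 - rp) * p + GG * (1 - rp) = (1 - p) * ps * (GG - p * uu)"
        unfolding rp_def by (simp add: algebra_simps)
      also have "(1 - p) * ps * (GG - p * uu) / ((1 - rp) * p) = ((1 - p) * ps / (1 - rp)) * T"
        unfolding T_def using pn rp1' by (simp add: field_simps)
      finally show ?thesis .
    qed
    show ?thesis unfolding E'_def e1 e2 e3[symmetric] by (simp add: algebra_simps)
  qed
  have S3: "p * ps * T = FF * (1 - r) - GG * (1 - ps) * (p + q)"
    unfolding T_def uu r_def[symmetric] using pn psn by (simp add: field_simps) (simp add: r_def algebra_simps)
  have S4: "q * X = BB * (1 - rp)" unfolding BB rp_def using rp1 by simp
  have S5: "FF * (1 - r) = \<beta> * p * (1 - ps) / (1 - r) + lam * (1 - r + p * (1 - ps))"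
  proof -
    have f1: "FF * (1 - r) = (\<beta> * p * (1 - ps) + lam) * (1 - r) + p * (1 - ps) * (r * \<beta> + gam + lam)"
      unfolding FF r_def[symmetric] using r1' by (simp add: distrib_right)
    have f2: "\<beta> * p * (1 - ps) / (1 - r) = \<beta> * p * (1 - ps) + p * (1 - ps) * gam"
      unfolding gam r_def[symmetric] using r1' by (simp add: field_simps)
    show ?thesis unfolding f1 f2 by (simp add: algebra_simps)
  qed
  have QA: "(1 - q) * AA = p / (1 - r)" unfolding AA r_def using qn by simp
  have A1: "(1 + aX) * (1 - r) = 1 - r + p * (1 - ps)" unfolding aX r_def[symmetric] using r1' by (simp add: field_simps)
  have B1: "p * bX = q * (1 - X) + p * BB" unfolding bX using pn by (simp add: distrib_left)
  have S6: "DD * (1 - r) = (p + q) * (1 + (1 - p) * (1 - ps) * BB)"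
  proof -
    have "DD * (1 - r) = (1 + aX) * (1 - r) * (1 - p) * BB + (1 + bX) * ((1 - q) * AA) * (1 - r)"
      unfolding DD by (simp add: algebra_simps)
    also have "\<dots> = (1 - r + p * (1 - ps)) * (1 - p) * BB + (p + p * bX)"
      unfolding A1 QA using r1' by (simp add: field_simps)
    also have "\<dots> = (1 - r + p * (1 - ps)) * (1 - p) * BB + (p + q - q * X + p * BB)"
      unfolding B1 by (simp add: algebra_simps)
    also have "\<dots> = (1 - r + p * (1 - ps)) * (1 - p) * BB + (p + q - BB * (1 - rp) + p * BB)"
      unfolding S4 ..
    also have "\<dots> = (p + q) * (1 + (1 - p) * (1 - ps) * BB)"
      unfolding r_def rp_def by (simp add: algebra_simps)
    finally show ?thesis .
  qed
  have S7: "GG * DD * (1 - r) = \<beta> * p * (1 - ps) * (1 - p) * BB / (1 - r) + (1 - \<beta>) * q * PS * p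
      + lam * ((1 - r + p * (1 - ps)) * (1 - p) * BB + BB * p)"
  proof -
    have "GG * DD * (1 - r) = \<beta> * p * (1 - ps) * ((1 - p) * BB) / (1 - r) + (1 - \<beta>) * q * PS * ((1 - q) * AA * (1 - r))
       + lam * ((1 + aX) * (1 - r) * ((1 - p) * BB) + BB * ((1 - q) * AA * (1 - r)))"
    proof -
      define c where "c = \<beta> * p * (1 - ps) / (1 - r)^2"
      have GG': "GG = c * nA + (1 - \<beta>) * q * PS * nB + lam * ((1 + aX) * nA + BB * nB)"
        unfolding GG c_def r_def by (simp add: algebra_simps)
      have n0D: "nA * DD = (1 - p) * BB" using DD0 nA by simp
      have n1D: "nB * DD = (1 - q) * AA" using DD0 nB by simp
      have c1: "c * (1 - r) = \<beta> * p * (1 - ps) / (1 - r)" unfolding c_def using r1' by (simp add: power2_eq_square)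
      have "GG * DD * (1 - r) = (c * (1 - r)) * (nA * DD) + (1 - \<beta>) * q * PS * ((nB * DD) * (1 - r))
         + lam * ((1 + aX) * (1 - r) * (nA * DD) + BB * ((nB * DD) * (1 - r)))"
        unfolding GG' by (simp add: algebra_simps)
      then show ?thesis unfolding c1 n0D n1D by (simp add: algebra_simps)
    qed
    also have "\<dots> = \<beta> * p * (1 - ps) * (1 - p) * BB / (1 - r) + (1 - \<beta>) * q * PS * p
      + lam * ((1 - r + p * (1 - ps)) * (1 - p) * BB + BB * p)"
      unfolding QA A1 using r1' by (simp add: mult.assoc)
    finally show ?thesis .
  qed
  define i1 where "i1 = 1 / p"
  define i2 where "i2 = 1 / (1 - rp)"
  have e1: "p * i1 = 1" unfolding i1_def using pn by simp
  have e2: "(1 - rp) * i2 = 1" unfolding i2_def using rp1' by simp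
  have S8: "PS * p = p + (1 - p) * (1 + p) * i1 + p * X * (rp * i2^2 + rp * n * i2 - (1 - p) * i1^2 - (1 - p) * n * i1)"
  proof -
    have PS': "PS = (1 - ((1 - p) + p * n) * X) * i1^2 + (rp + (1 - rp) * n) * X * i2^2"
      unfolding PS rp_def[symmetric] i1_def i2_def by (simp add: power_one_over divide_inverse power_inverse)
    show ?thesis unfolding PS' using e1 e2 by algebra
  qed
  have b': "bb = (1 - p) * (1 - \<beta>) * i1" unfolding bb i1_def by simp
  have E'v: "E' = (1 - \<beta>) * (rp * i2^2 + rp * n * i2 - (1 - p) * i1^2 - (1 - p) * n * i1) + lam * i2"
  proof -
    have g': "gam' = rp * (1 - \<beta>) * i2" unfolding gam' rp_def[symmetric] i2_def by simp
    have L: "E' = (rp * (1 - \<beta>) + rp * gam' + lam) * i2 + gam' * n - bb * i1 - bb * n"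
      unfolding E'_def i1_def i2_def by (simp add: divide_inverse)
    show ?thesis unfolding L g' b' using e1 e2 by algebra
  qed
  have "p * (GG + uu - q * (aa + bb + (al' + gam' * n - aa - bb * n) * X) - (1 - q) * uu)
      = GG * (p + q) - q * bb * (1 + p) - (q * X / (1 - rp)) * (1 - p) * (p * ps * T) - p * q * X * E'"
    unfolding S1 S2 using pn rp1' by (simp add: T_def field_simps)
  also have "\<dots> = GG * (p + q) - q * bb * (1 + p) - BB * (1 - p) * (FF * (1 - r) - GG * (1 - ps) * (p + q)) - p * q * X * E'"
    unfolding S3 using S4 rp1' by simp
  also have "\<dots> = GG * DD * (1 - r) - q * bb * (1 + p) - BB * (1 - p) * (FF * (1 - r)) - p * q * X * E'"
  proof -
    have S6': "GG * DD * (1 - r) = GG * ((p + q) * (1 + (1 - p) * (1 - ps) * BB))"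
      using S6 by (simp add: mult.assoc)
    show ?thesis unfolding S6' by (simp add: algebra_simps)
  qed
  also have "\<dots> = (1 - \<beta>) * q * (PS * p) + lam * BB * p - q * bb * (1 + p) - p * q * X * E'"
    unfolding S7 S5 by (simp add: algebra_simps)
  also have "\<dots> = p * (q * (1 - \<beta>))"
    unfolding S8 E'v b' using e1 e2 S4 by algebra
  finally show ?thesis using pn by simp
qed

definition Pop :: "real \<Rightarrow> real \<Rightarrow> real \<Rightarrow> bool \<Rightarrow> state \<Rightarrow> (state \<Rightarrow> real) \<Rightarrow> real" where
  "Pop p q ps a s f = (case s of (x, xh, d) \<Rightarrow>
     src p q x 0 * (if a then ps * f (0,0,0) + (1 - ps) * f (0, xh, age_upd 0 xh d) else f (0, xh, age_upd 0 xh d))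
   + src p q x 1 * (if a then ps * f (1,1,0) + (1 - ps) * f (1, xh, age_upd 1 xh d) else f (1, xh, age_upd 1 xh d)))"

lemma ind_has_sum:
  assumes "t \<in> A"
  shows "((\<lambda>s'. (if s' = t then 1 else 0) * f s') has_sum (f t :: real)) A"
  by (rule has_sum_finite_neutralI[where B="{t}"]) (use assms in auto)

lemma SS_cases:
  assumes "s \<in> SS"
  obtains "s = (0,0,0)" | "s = (1,1,0)" | d where "d \<ge> 1" "s = (1,0,d)" | d where "d \<ge> 1" "s = (0,1,d)"
  using assms unfolding SS_def by blast

lemma targets_SS:
  assumes "(x, xh, d) \<in> SS" "y \<in> {0,1}"
  shows "(y, xh, age_upd y xh d) \<in> SS"
  using assms by (auto simp: SS_def age_upd_def)

lemma trans_has_sum: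
  assumes "s \<in> SS"
  shows "((\<lambda>s'. trans p q ps s a s' * f s') has_sum Pop p q ps a s f) SS"
proof -
  obtain x xh d where s: "s = (x, xh, d)" by (cases s) auto
  define I where "I t s' = (if s' = (t::state) then (1::real) else 0)" for t s'
  define t0 where "t0 = (0::nat, xh, age_upd 0 xh d)"
  define t1 where "t1 = (1::nat, xh, age_upd 1 xh d)"
  have T0: "t0 \<in> SS" and T1: "t1 \<in> SS" using targets_SS[of x xh d] assms s unfolding t0_def t1_def by auto
  have S0: "(0::nat,0::nat,0::nat) \<in> SS" and S1: "(1::nat,1::nat,0::nat) \<in> SS" by (auto simp: SS_def)
  have h: "((\<lambda>s'. I t s' * f s') has_sum f t) SS" if "t \<in> SS" for t
    using ind_has_sum[OF that] unfolding I_def .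
  show ?thesis
  proof (cases a)
    case True
    have eq: "trans p q ps s a s' * f s' = src p q x 0 * (ps * (I (0,0,0) s' * f s') + (1 - ps) * (I t0 s' * f s'))
       + src p q x 1 * (ps * (I (1,1,0) s' * f s') + (1 - ps) * (I t1 s' * f s'))" for s'
      unfolding trans_def s I_def t0_def t1_def using True by (simp add: algebra_simps)
    have "((\<lambda>s'. src p q x 0 * (ps * (I (0,0,0) s' * f s') + (1 - ps) * (I t0 s' * f s'))
       + src p q x 1 * (ps * (I (1,1,0) s' * f s') + (1 - ps) * (I t1 s' * f s'))) has_sum
       (src p q x 0 * (ps * f (0,0,0) + (1 - ps) * f t0) + src p q x 1 * (ps * f (1,1,0) + (1 - ps) * f t1))) SS"
      by (intro has_sum_add has_sum_cmult_right h T0 T1 S0 S1)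
    moreover have "Pop p q ps a s f = src p q x 0 * (ps * f (0,0,0) + (1 - ps) * f t0) + src p q x 1 * (ps * f (1,1,0) + (1 - ps) * f t1)"
      unfolding Pop_def s t0_def t1_def using True by simp
    ultimately show ?thesis by (simp only: eq)
  next
    case False
    have eq: "trans p q ps s a s' * f s' = src p q x 0 * (I t0 s' * f s') + src p q x 1 * (I t1 s' * f s')" for s'
      unfolding trans_def s I_def t0_def t1_def using False by (simp add: algebra_simps)
    have "((\<lambda>s'. src p q x 0 * (I t0 s' * f s') + src p q x 1 * (I t1 s' * f s')) has_sum
       (src p q x 0 * f t0 + src p q x 1 * f t1)) SS"
      by (intro has_sum_add has_sum_cmult_right h T0 T1)
    moreover have "Pop p q ps a s f = src p q x 0 * f t0 + src p q x 1 * f t1"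
      unfolding Pop_def s t0_def t1_def using False by simp
    ultimately show ?thesis by (simp only: eq)
  qed
qed

locale M =
  fixes p q ps :: real and du :: nat
  assumes p0: "0 < p" and p1: "p < 1" and q0: "0 < q" and q1: "q < 1"
    and ps0: "0 < ps" and ps1: "ps \<le> 1" and du1: "1 \<le> du"
begin

abbreviation "pol \<equiv> switching 0 du"
abbreviation "mu \<equiv> state_dist p q ps pol"
definition age :: "state \<Rightarrow> nat" where "age s = snd (snd s)"
definition Fin :: "nat \<Rightarrow> state set" where "Fin n = {s\<in>SS. age s \<le> n}"
definition E :: "nat \<Rightarrow> (state \<Rightarrow> real) \<Rightarrow> real" where
  "E n f = (\<Sum>s\<in>Fin n. mu n s * f s)"

lemma Fin_sub: "Fin n \<subseteq> {0,1} \<times> {0,1} \<times> {..n}"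
  by (auto simp: Fin_def SS_def age_def)

lemma finite_Fin: "finite (Fin n)"
  by (rule finite_subset[OF Fin_sub]) auto

lemma Fin_SS: "Fin n \<subseteq> SS" by (auto simp: Fin_def)

lemma src_nonneg: "src p q x y \<ge> 0"
  using p0 p1 q0 q1 by (auto simp: src_def)

lemma trans_nonneg: "trans p q ps s a s' \<ge> 0"
  using ps0 ps1 by (cases s) (auto simp: trans_def src_nonneg intro!: add_nonneg_nonneg mult_nonneg_nonneg)

lemma trans_far:
  assumes "s \<in> SS" "age s' > age s + 1"
  shows "trans p q ps s a s' = 0"
  using assms by (cases s; cases s') (auto simp: trans_def age_def age_upd_def)

lemma mu_supp: "s \<in> SS \<Longrightarrow> age s > n \<Longrightarrow> mu n s = 0"
proof (induction n arbitrary: s)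
  case 0
  then show ?case by (auto simp: age_def)
next
  case (Suc n)
  have "mu n s0 * trans p q ps s0 (pol s0) s = 0" if "s0 \<in> SS" for s0
  proof (cases "age s0 \<le> n")
    case True
    then show ?thesis using trans_far[OF that, of s] Suc.prems by auto
  next
    case False
    then show ?thesis using Suc.IH[OF that] by auto
  qed
  then show ?case by (simp add: infsum_0)
qed

lemma mu_step: "mu (Suc n) s' = (\<Sum>s\<in>Fin n. mu n s * trans p q ps s (pol s) s')"
proof -
  have "mu (Suc n) s' = (\<Sum>\<^sub>\<infinity>s\<in>SS. mu n s * trans p q ps s (pol s) s')" by simp
  also have "\<dots> = (\<Sum>\<^sub>\<infinity>s\<in>Fin n. mu n s * trans p q ps s (pol s) s')"
    by (rule infsum_cong_neutral) (auto simp: Fin_def mu_supp)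
  also have "\<dots> = (\<Sum>s\<in>Fin n. mu n s * trans p q ps s (pol s) s')"
    using finite_Fin by simp
  finally show ?thesis .
qed

lemma mu_nonneg: "mu n s \<ge> 0"
proof (induction n arbitrary: s)
  case 0 then show ?case by simp
next
  case (Suc n) then show ?case
    by (simp only: mu_step) (auto intro!: sum_nonneg mult_nonneg_nonneg trans_nonneg)
qed

lemma infsum_E: "(\<Sum>\<^sub>\<infinity>s\<in>SS. mu n s * f s) = E n f"
proof -
  have "(\<Sum>\<^sub>\<infinity>s\<in>SS. mu n s * f s) = (\<Sum>\<^sub>\<infinity>s\<in>Fin n. mu n s * f s)"
    by (rule infsum_cong_neutral) (auto simp: Fin_def mu_supp)
  then show ?thesis using finite_Fin by (simp add: E_def)
qed

lemma Pop_finite: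
  assumes "s \<in> Fin n"
  shows "(\<Sum>s'\<in>Fin (Suc n). trans p q ps s a s' * f s') = Pop p q ps a s f"
proof -
  have sS: "s \<in> SS" using assms by (auto simp: Fin_def)
  have "((\<lambda>s'. trans p q ps s a s' * f s') has_sum (\<Sum>s'\<in>Fin (Suc n). trans p q ps s a s' * f s')) SS"
  proof (rule has_sum_finite_neutralI[OF finite_Fin Fin_SS])
    fix s' assume "s' \<in> SS - Fin (Suc n)"
    then have "age s' > age s + 1" using assms by (auto simp: Fin_def)
    then show "trans p q ps s a s' * f s' = 0" using trans_far[OF sS] by simp
  qed simp
  then show ?thesis using trans_has_sum[OF sS] has_sum_unique by blast
qed

lemma E_step: "E (Suc n) f = E n (\<lambda>s. Pop p q ps (pol s) s f)"
proof -
  have "E (Suc n) f = (\<Sum>s'\<in>Fin (Suc n). \<Sum>s\<in>Fin n. mu n s * trans p q ps s (pol s) s' * f s')"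
    unfolding E_def mu_step by (simp add: sum_distrib_right)
  also have "\<dots> = (\<Sum>s\<in>Fin n. mu n s * (\<Sum>s'\<in>Fin (Suc n). trans p q ps s (pol s) s' * f s'))"
    by (subst sum.swap) (simp add: sum_distrib_left mult.assoc)
  also have "\<dots> = E n (\<lambda>s. Pop p q ps (pol s) s f)"
    unfolding E_def by (rule sum.cong) (auto simp: Pop_finite)
  finally show ?thesis .
qed

lemma E_add: "E n (\<lambda>s. f s + g s) = E n f + E n g"
  by (simp add: E_def distrib_left sum.distrib)

lemma E_cmult: "E n (\<lambda>s. c * f s) = c * E n f"
  by (simp add: E_def sum_distrib_left mult.left_commute)

lemma E_diff: "E n (\<lambda>s. f s - g s) = E n f - E n g"
  by (simp add: E_def right_diff_distrib sum_subtractf)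

lemma E_mono: "(\<And>s. s \<in> SS \<Longrightarrow> f s \<le> g s) \<Longrightarrow> E n f \<le> E n g"
  unfolding E_def Fin_def by (auto intro!: sum_mono mult_left_mono mu_nonneg)

lemma E_cong: "(\<And>s. s \<in> SS \<Longrightarrow> f s = g s) \<Longrightarrow> E n f = E n g"
  unfolding E_def Fin_def by (auto intro!: sum.cong)

lemma E_abs: "\<bar>E n f\<bar> \<le> E n (\<lambda>s. \<bar>f s\<bar>)"
  unfolding E_def by (rule order_trans[OF sum_abs]) (simp add: abs_mult mu_nonneg)

lemma E0: "E 0 f = f (0,0,0)"
proof -
  have "Fin 0 = {(0,0,0),(1,1,0)}" by (auto simp: Fin_def SS_def age_def)
  then show ?thesis by (simp add: E_def)
qed

lemma Pop_const: "s \<in> SS \<Longrightarrow> Pop p q ps a s (\<lambda>_. c) = c"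
  by (auto simp: SS_def Pop_def src_def algebra_simps)

lemma E_one: "E n (\<lambda>_. 1) = 1"
proof (induction n)
  case 0 then show ?case by (simp add: E0)
next
  case (Suc n)
  then show ?case by (simp add: E_step Pop_const E_cong[of "\<lambda>s. Pop p q ps (pol s) s (\<lambda>_. 1)" "\<lambda>_. 1"])
qed

definition rho where "rho = max (1 - p) (1 - q)"

lemma rho: "0 \<le> rho" "rho < 1" using p0 p1 q0 q1 by (auto simp: rho_def)

lemma Pop_age: "s \<in> SS \<Longrightarrow> Pop p q ps (pol s) s (\<lambda>s. real (age s)) \<le> rho * real (age s) + 1"
proof (erule SS_cases)
  assume "s = (0,0,0)"
  then show ?thesis using p0 p1 ps0 ps1 rho
    by (simp add: Pop_def src_def age_def age_upd_def switching_def mult_le_one)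
next
  assume "s = (1,1,0)"
  then show ?thesis using q0 q1 ps0 ps1 rho du1
    by (simp add: Pop_def src_def age_def age_upd_def switching_def)
next
  fix d assume d: "1 \<le> d" "s = (1,0,d)"
  have "(1 - q) * ((1 - ps) * (real d + 1)) \<le> (1 - q) * (real d + 1)"
    using q1 ps0 ps1 by (intro mult_left_mono) auto
  also have "\<dots> \<le> rho * real d + 1"
  proof -
    have "(1 - q) * real d \<le> rho * real d" by (rule mult_right_mono) (auto simp: rho_def)
    then show ?thesis using q0 by (simp add: algebra_simps)
  qed
  finally show ?thesis using d
    by (simp add: Pop_def src_def age_def age_upd_def switching_def add.commute)
next
  fix d assume d: "1 \<le> d" "s = (0,1,d)"
  have "(1 - p) * ((1 - ps) * (real d + 1)) \<le> (1 - p) * (real d + 1)"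
    using p1 ps0 ps1 by (intro mult_left_mono) auto
  moreover have "(1 - p) * (real d + 1) \<le> rho * real d + 1"
  proof -
    have "(1 - p) * real d \<le> rho * real d" by (rule mult_right_mono) (auto simp: rho_def)
    then show ?thesis using p0 by (simp add: algebra_simps)
  qed
  ultimately show ?thesis using d
    by (simp add: Pop_def src_def age_def age_upd_def switching_def add.commute)
qed

lemma E_age: "E n (\<lambda>s. real (age s)) \<le> 1 / (1 - rho)"
proof (induction n)
  case 0 then show ?case using rho by (simp add: E0 age_def)
next
  case (Suc n)
  have "E (Suc n) (\<lambda>s. real (age s)) \<le> E n (\<lambda>s. rho * real (age s) + 1)"
    unfolding E_step by (rule E_mono) (rule Pop_age)
  also have "\<dots> = rho * E n (\<lambda>s. real (age s)) + 1" by (simp add: E_add E_cmult E_one)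
  also have "\<dots> \<le> rho * (1 / (1 - rho)) + 1" using mult_left_mono[OF Suc rho(1)] by simp
  also have "\<dots> = 1 / (1 - rho)" using rho by (simp add: field_simps)
  finally show ?case .
qed

end

lemma has_sum_SS:
  fixes f :: "state \<Rightarrow> real"
  assumes "((\<lambda>d. f (1,0,Suc d)) has_sum S1) UNIV" "((\<lambda>d. f (0,1,Suc d)) has_sum S2) UNIV"
  shows "(f has_sum (f (0,0,0) + (f (1,1,0) + (S1 + S2)))) SS"
proof -
  define h1 where "h1 d = (1::nat, 0::nat, Suc d)" for d
  define h2 where "h2 d = (0::nat, 1::nat, Suc d)" for d
  have i1: "inj h1" and i2: "inj h2" by (auto simp: inj_def h1_def h2_def)
  have a1: "(f has_sum S1) (range h1)" using assms(1) has_sum_reindex[OF i1, of f] by (simp add: o_def h1_def)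
  have a2: "(f has_sum S2) (range h2)" using assms(2) has_sum_reindex[OF i2, of f] by (simp add: o_def h2_def)
  have "(f has_sum (S1 + S2)) (range h1 \<union> range h2)"
    by (rule has_sum_Un_disjoint[OF a1 a2]) (auto simp: h1_def h2_def)
  then have "(f has_sum (f (1,1,0) + (S1 + S2))) (insert (1,1,0) (range h1 \<union> range h2))"
    by (rule has_sum_insert[rotated]) (auto simp: h1_def h2_def)
  then have "(f has_sum (f (0,0,0) + (f (1,1,0) + (S1 + S2)))) (insert (0,0,0) (insert (1,1,0) (range h1 \<union> range h2)))"
    by (rule has_sum_insert[rotated]) (auto simp: h1_def h2_def)
  moreover have "insert (0,0,0) (insert (1,1,0) (range h1 \<union> range h2)) = SS"
  proof -
    have "s \<in> range h1" if "s = (1,0,d)" "d \<ge> 1" for s d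
      using that by (auto simp: h1_def image_iff intro!: exI[of _ "d - 1"])
    moreover have "s \<in> range h2" if "s = (0,1,d)" "d \<ge> 1" for s d
      using that by (auto simp: h2_def image_iff intro!: exI[of _ "d - 1"])
    ultimately show ?thesis unfolding SS_def by (auto simp: h1_def h2_def)
  qed
  ultimately show ?thesis by simp
qed

lemma has_sum_geo:
  fixes r c :: real
  assumes "0 \<le> r" "r < 1"
  shows "((\<lambda>d. c * r ^ d) has_sum (c / (1 - r))) UNIV"
proof -
  have "(\<lambda>d. r ^ d) sums (1 / (1 - r))" using geometric_sums[of r] assms by simp
  then have "(\<lambda>d. c * r ^ d) sums (c * (1 / (1 - r)))" by (rule sums_mult)
  moreover have "summable (\<lambda>d. norm (c * r ^ d))"
    using assms by (simp add: abs_mult power_abs summable_mult summable_geometric)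
  ultimately show ?thesis using norm_summable_imp_has_sum by fastforce
qed

lemma has_sum_split_at:
  fixes \<phi> :: "nat \<Rightarrow> real"
  assumes "((\<lambda>j. \<phi> (m + j)) has_sum S) UNIV"
  shows "(\<phi> has_sum ((\<Sum>k<m. \<phi> k) + S)) UNIV"
proof -
  have i: "inj (\<lambda>j. m + j)" by (auto simp: inj_def)
  have a: "(\<phi> has_sum S) (range (\<lambda>j. m + j))" using assms has_sum_reindex[OF i, of \<phi>] by (simp add: o_def)
  have b: "(\<phi> has_sum (\<Sum>k<m. \<phi> k)) {..<m}" by simp
  have "(\<phi> has_sum ((\<Sum>k<m. \<phi> k) + S)) ({..<m} \<union> range (\<lambda>j. m + j))"
    by (rule has_sum_Un_disjoint[OF b a]) auto
  moreover have "{..<m} \<union> range (\<lambda>j. m + j) = UNIV"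
    by (auto simp: image_iff) (metis le_add_diff_inverse not_less)
  ultimately show ?thesis by simp
qed

lemma has_sum_single:
  fixes f :: "state \<Rightarrow> real"
  assumes "s0 \<in> SS" "\<And>s. s \<in> SS \<Longrightarrow> s \<noteq> s0 \<Longrightarrow> f s = 0"
  shows "(f has_sum f s0) SS"
  by (rule has_sum_finite_neutralI[where B="{s0}"]) (use assms in auto)

context M begin

definition "a1 = p * (1 - ps) / (1 - (1 - q) * (1 - ps))"
definition "AA = p / ((1 - q) * (1 - (1 - q) * (1 - ps)))"
definition "BB = q * (1 - p) ^ (du - 1) / (1 - (1 - p) * (1 - ps))"
definition "b1 = q * (1 - (1 - p) ^ (du - 1)) / (1 - (1 - p)) + BB"
definition "DD = (1 + a1) * (1 - p) * BB + (1 + b1) * (1 - q) * AA"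

definition nuf :: "real \<Rightarrow> real \<Rightarrow> state \<Rightarrow> real" where
  "nuf n0 n1 = (\<lambda>(x, xh, k).
           if (x, xh, k) = (0, 0, 0) then n0
           else if (x, xh, k) = (1, 1, 0) then n1
           else if x = 1 \<and> xh = 0 then p * (1 - ps) * ((1 - q) * (1 - ps)) ^ (k - 1) * n0
           else if x = 0 \<and> xh = 1 then
             (if k \<le> du then q * (1 - p) ^ (k - 1) * n1
              else q * (1 - p) ^ (du - 1) * ((1 - p) * (1 - ps)) ^ (k - du) * n1)
           else 0)"

lemma r_facts: "0 \<le> (1 - q) * (1 - ps)" "(1 - q) * (1 - ps) < 1"
  "0 \<le> (1 - p) * (1 - ps)" "(1 - p) * (1 - ps) < 1"
proof -
  show "0 \<le> (1 - q) * (1 - ps)" "0 \<le> (1 - p) * (1 - ps)" using p1 q1 ps1 by auto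
  have "(1 - q) * (1 - ps) \<le> (1 - q) * 1" using q1 ps0 by (intro mult_left_mono) auto
  then show "(1 - q) * (1 - ps) < 1" using q0 by simp
  have "(1 - p) * (1 - ps) \<le> (1 - p) * 1" using p1 ps0 by (intro mult_left_mono) auto
  then show "(1 - p) * (1 - ps) < 1" using p0 by simp
qed

lemma pos_facts: "0 \<le> a1" "0 < AA" "0 < BB" "0 \<le> b1" "0 < DD"
proof -
  note r = r_facts
  show a: "0 \<le> a1" unfolding a1_def using r p0 ps1 by (intro divide_nonneg_pos mult_nonneg_nonneg) auto
  show A: "0 < AA" unfolding AA_def using r p0 q1 by (intro divide_pos_pos mult_pos_pos) auto
  show B: "0 < BB" unfolding BB_def using r q0 p1 by (intro divide_pos_pos mult_pos_pos) auto
  have "(1 - p) ^ (du - 1) \<le> 1" using p0 p1 by (intro power_le_one) auto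
  then show b: "0 \<le> b1" unfolding b1_def using B p0 q0 by (intro add_nonneg_nonneg divide_nonneg_pos mult_nonneg_nonneg) auto
  have "0 < 1 + a1" "0 < 1 + b1" using a b by auto
  then have "0 < (1 + a1) * (1 - p) * BB" "0 < (1 + b1) * (1 - q) * AA" using A B p1 q1
    by (auto intro!: mult_pos_pos)
  then show "0 < DD" unfolding DD_def by linarith
qed

lemma sum_S1: "((\<lambda>d. nuf n0 n1 (1,0,Suc d)) has_sum (a1 * n0)) UNIV"
proof -
  have "((\<lambda>d. (p * (1 - ps) * n0) * ((1 - q) * (1 - ps)) ^ d) has_sum ((p * (1 - ps) * n0) / (1 - (1 - q) * (1 - ps)))) UNIV"
    using r_facts by (intro has_sum_geo) auto
  then show ?thesis by (simp add: nuf_def a1_def mult_ac)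
qed

lemma nuf01_tail: "nuf n0 n1 (0,1,du + j) = (q * (1 - p) ^ (du - 1) * n1) * ((1 - p) * (1 - ps)) ^ j"
  using du1 by (cases j) (auto simp: nuf_def mult_ac)

lemma sum_S2: "((\<lambda>d. nuf n0 n1 (0,1,Suc d)) has_sum (b1 * n1)) UNIV"
proof -
  have t: "((\<lambda>j. (q * (1 - p) ^ (du - 1) * n1) * ((1 - p) * (1 - ps)) ^ j) has_sum
      ((q * (1 - p) ^ (du - 1) * n1) / (1 - (1 - p) * (1 - ps)))) UNIV"
    using r_facts by (intro has_sum_geo) auto
  have "((\<lambda>j. nuf n0 n1 (0,1,Suc (du - 1 + j))) has_sum BB * n1) UNIV"
    using t du1 nuf01_tail by (simp add: BB_def)
  then have "((\<lambda>d. nuf n0 n1 (0,1,Suc d)) has_sum ((\<Sum>k<du - 1. nuf n0 n1 (0,1,Suc k)) + BB * n1)) UNIV"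
    by (rule has_sum_split_at)
  moreover have "(\<Sum>k<du - 1. nuf n0 n1 (0,1,Suc k)) = (\<Sum>k<du - 1. q * n1 * (1 - p) ^ k)"
    by (rule sum.cong) (auto simp: nuf_def)
  moreover have "(\<Sum>k<du - 1. q * n1 * (1 - p) ^ k) = q * n1 * ((1 - (1 - p) ^ (du - 1)) / (1 - (1 - p)))"
    using p0 by (simp add: sum_distrib_left[symmetric] sum_gp_strict)
  ultimately show ?thesis by (simp add: b1_def algebra_simps)
qed

lemma sum_nuf: "(nuf n0 n1 has_sum ((1 + a1) * n0 + (1 + b1) * n1)) SS"
  using has_sum_SS[OF sum_S1 sum_S2, of n0 n1] by (simp add: nuf_def algebra_simps)

end

context M begin

lemma trans_into_000: "s \<in> SS \<Longrightarrow> trans p q ps s (pol s) (0,0,0) =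
   (if s = (0,0,0) then 1 - p else if s = (1,1,0) then 0 else if fst s = 1 then q
    else if snd (snd s) \<ge> du then (1 - p) * ps else 0)"
  apply (erule SS_cases) using du1 by (auto simp: trans_def src_def age_upd_def switching_def algebra_simps)

lemma trans_into_110: "s \<in> SS \<Longrightarrow> trans p q ps s (pol s) (1,1,0) =
   (if s = (0,0,0) then p * ps else if s = (1,1,0) then 1 - q else if fst s = 1 then (1 - q) * ps
    else p)"
  apply (erule SS_cases) using du1 by (auto simp: trans_def src_def age_upd_def switching_def algebra_simps)

lemma bal_000: "((\<lambda>s. nuf n0 n1 s * trans p q ps s (pol s) (0,0,0)) has_sum
    ((1 - p) * n0 + (q * a1 * n0 + (1 - p) * ps * BB * n1))) SS"
proof -
  have s1: "((\<lambda>d. nuf n0 n1 (1,0,Suc d) * trans p q ps (1,0,Suc d) (pol (1,0,Suc d)) (0,0,0)) has_sum (a1 * n0 * q)) UNIV"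
    using has_sum_cmult_left[OF sum_S1[of n0 n1], where c=q] by (subst trans_into_000) (auto simp: SS_def)
  define c where "c = q * (1 - p) ^ (du - 1) * n1"
  have t: "((\<lambda>j. (c * ((1 - p) * ps)) * ((1 - p) * (1 - ps)) ^ j) has_sum
      ((c * ((1 - p) * ps)) / (1 - (1 - p) * (1 - ps)))) UNIV"
    using r_facts by (intro has_sum_geo) auto
  have "((\<lambda>j. nuf n0 n1 (0,1,Suc (du - 1 + j)) * trans p q ps (0,1,Suc (du - 1 + j)) (pol (0,1,Suc (du - 1 + j))) (0,0,0))
     has_sum ((1 - p) * ps * BB * n1)) UNIV"
  proof -
    have "nuf n0 n1 (0,1,Suc (du - 1 + j)) * trans p q ps (0,1,Suc (du - 1 + j)) (pol (0,1,Suc (du - 1 + j))) (0,0,0)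
       = (c * ((1 - p) * ps)) * ((1 - p) * (1 - ps)) ^ j" for j
      using du1 nuf01_tail[of n0 n1 j] by (subst trans_into_000) (auto simp: SS_def c_def)
    moreover have "(c * ((1 - p) * ps)) / (1 - (1 - p) * (1 - ps)) = (1 - p) * ps * BB * n1"
      by (simp add: c_def BB_def)
    ultimately show ?thesis using t by simp
  qed
  then have "((\<lambda>d. nuf n0 n1 (0,1,Suc d) * trans p q ps (0,1,Suc d) (pol (0,1,Suc d)) (0,0,0)) has_sum
     ((\<Sum>k<du - 1. nuf n0 n1 (0,1,Suc k) * trans p q ps (0,1,Suc k) (pol (0,1,Suc k)) (0,0,0)) + (1 - p) * ps * BB * n1)) UNIV"
    by (rule has_sum_split_at)
  moreover have "(\<Sum>k<du - 1. nuf n0 n1 (0,1,Suc k) * trans p q ps (0,1,Suc k) (pol (0,1,Suc k)) (0,0,0)) = 0"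
    by (rule sum.neutral) (auto simp: trans_into_000 SS_def)
  ultimately have s2: "((\<lambda>d. nuf n0 n1 (0,1,Suc d) * trans p q ps (0,1,Suc d) (pol (0,1,Suc d)) (0,0,0)) has_sum
     ((1 - p) * ps * BB * n1)) UNIV" by simp
  have tv: "trans p q ps (0,0,0) (pol (0,0,0)) (0,0,0) = 1 - p" "trans p q ps (1,1,0) (pol (1,1,0)) (0,0,0) = 0"
    by (subst trans_into_000; simp add: SS_def)+
  have v: "nuf n0 n1 (0,0,0) * trans p q ps (0,0,0) (pol (0,0,0)) (0,0,0) + (nuf n0 n1 (1,1,0) * trans p q ps (1,1,0) (pol (1,1,0)) (0,0,0)
     + (a1 * n0 * q + (1 - p) * ps * BB * n1)) = (1 - p) * n0 + (q * a1 * n0 + (1 - p) * ps * BB * n1)"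
    unfolding tv by (simp add: nuf_def algebra_simps)
  show ?thesis using has_sum_SS[OF s1 s2] v by metis
qed

lemma bal_110: "((\<lambda>s. nuf n0 n1 s * trans p q ps s (pol s) (1,1,0)) has_sum
    (p * ps * n0 + ((1 - q) * n1 + (a1 * n0 * ((1 - q) * ps) + b1 * n1 * p)))) SS"
proof -
  have s1: "((\<lambda>d. nuf n0 n1 (1,0,Suc d) * trans p q ps (1,0,Suc d) (pol (1,0,Suc d)) (1,1,0)) has_sum (a1 * n0 * ((1 - q) * ps))) UNIV"
    using has_sum_cmult_left[OF sum_S1[of n0 n1], where c="(1 - q) * ps"] by (subst trans_into_110) (auto simp: SS_def)
  have s2: "((\<lambda>d. nuf n0 n1 (0,1,Suc d) * trans p q ps (0,1,Suc d) (pol (0,1,Suc d)) (1,1,0)) has_sum (b1 * n1 * p)) UNIV"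
    using has_sum_cmult_left[OF sum_S2[of n0 n1], where c=p] by (subst trans_into_110) (auto simp: SS_def)
  have tv: "trans p q ps (0,0,0) (pol (0,0,0)) (1,1,0) = p * ps" "trans p q ps (1,1,0) (pol (1,1,0)) (1,1,0) = 1 - q"
    by (subst trans_into_110; simp add: SS_def)+
  have v: "nuf n0 n1 (0,0,0) * trans p q ps (0,0,0) (pol (0,0,0)) (1,1,0) + (nuf n0 n1 (1,1,0) * trans p q ps (1,1,0) (pol (1,1,0)) (1,1,0)
     + (a1 * n0 * ((1 - q) * ps) + b1 * n1 * p)) = p * ps * n0 + ((1 - q) * n1 + (a1 * n0 * ((1 - q) * ps) + b1 * n1 * p))"
    unfolding tv by (simp add: nuf_def algebra_simps)
  show ?thesis using has_sum_SS[OF s1 s2] v by metis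
qed

lemma trans_into_10: "s \<in> SS \<Longrightarrow> trans p q ps s (pol s) (1,0,Suc k) =
   (if s = (0,0,0) \<and> k = 0 then p * (1 - ps) else if s = (1,0,k) \<and> k \<ge> 1 then (1 - q) * (1 - ps) else 0)"
  apply (erule SS_cases) using du1 by (auto simp: trans_def src_def age_upd_def switching_def algebra_simps)

lemma trans_into_01: "s \<in> SS \<Longrightarrow> trans p q ps s (pol s) (0,1,Suc k) =
   (if s = (1,1,0) \<and> k = 0 then q else if s = (0,1,k) \<and> k \<ge> 1 then
      (if du \<le> k then (1 - p) * (1 - ps) else 1 - p) else 0)"
  apply (erule SS_cases) using du1 by (auto simp: trans_def src_def age_upd_def switching_def algebra_simps)

lemma SS_memI: "(0,0,0) \<in> SS" "(1,1,0) \<in> SS" "k \<ge> 1 \<Longrightarrow> (1,0,k) \<in> SS" "k \<ge> 1 \<Longrightarrow> (0,1,k) \<in> SS"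
  by (auto simp: SS_def)

lemma pred_10_1: "((\<lambda>s. g s * trans p q ps s (pol s) (1,0,1)) has_sum (g (0,0,0) * (p * (1 - ps)))) SS"
proof -
  have "((\<lambda>s. g s * trans p q ps s (pol s) (1,0,Suc 0)) has_sum (g (0,0,0) * trans p q ps (0,0,0) (pol (0,0,0)) (1,0,Suc 0))) SS"
  proof (rule has_sum_single)
    show "(0,0,0) \<in> SS" by (simp add: SS_def)
    fix s assume sS: "s \<in> SS" "s \<noteq> (0,0,0)"
    then show "g s * trans p q ps s (pol s) (1,0,Suc 0) = 0" using trans_into_10[OF sS(1)] by simp
  qed
  moreover have "trans p q ps (0,0,0) (pol (0,0,0)) (1,0,Suc 0) = p * (1 - ps)" using trans_into_10[OF SS_memI(1)] by simp
  ultimately show ?thesis by simp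
qed

lemma pred_10: "k \<ge> 1 \<Longrightarrow> ((\<lambda>s. g s * trans p q ps s (pol s) (1,0,Suc k)) has_sum (g (1,0,k) * ((1 - q) * (1 - ps)))) SS"
proof -
  assume k: "k \<ge> 1"
  have "((\<lambda>s. g s * trans p q ps s (pol s) (1,0,Suc k)) has_sum (g (1,0,k) * trans p q ps (1,0,k) (pol (1,0,k)) (1,0,Suc k))) SS"
  proof (rule has_sum_single)
    show "(1,0,k) \<in> SS" using k by (simp add: SS_def)
    fix s assume sS: "s \<in> SS" "s \<noteq> (1,0,k)"
    then show "g s * trans p q ps s (pol s) (1,0,Suc k) = 0" using trans_into_10[OF sS(1)] k by simp
  qed
  moreover have "trans p q ps (1,0,k) (pol (1,0,k)) (1,0,Suc k) = (1 - q) * (1 - ps)" using k trans_into_10[OF SS_memI(3)[OF k]] by simp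
  ultimately show ?thesis by simp
qed

lemma pred_01_1: "((\<lambda>s. g s * trans p q ps s (pol s) (0,1,1)) has_sum (g (1,1,0) * q)) SS"
proof -
  have "((\<lambda>s. g s * trans p q ps s (pol s) (0,1,Suc 0)) has_sum (g (1,1,0) * trans p q ps (1,1,0) (pol (1,1,0)) (0,1,Suc 0))) SS"
  proof (rule has_sum_single)
    show "(1,1,0) \<in> SS" by (simp add: SS_def)
    fix s assume sS: "s \<in> SS" "s \<noteq> (1,1,0)"
    then show "g s * trans p q ps s (pol s) (0,1,Suc 0) = 0" using trans_into_01[OF sS(1)] by simp
  qed
  moreover have "trans p q ps (1,1,0) (pol (1,1,0)) (0,1,Suc 0) = q" using trans_into_01[OF SS_memI(2)] by simp
  ultimately show ?thesis by simp
qed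

lemma pred_01: "k \<ge> 1 \<Longrightarrow> ((\<lambda>s. g s * trans p q ps s (pol s) (0,1,Suc k)) has_sum
   (g (0,1,k) * (if du \<le> k then (1 - p) * (1 - ps) else 1 - p))) SS"
proof -
  assume k: "k \<ge> 1"
  have "((\<lambda>s. g s * trans p q ps s (pol s) (0,1,Suc k)) has_sum (g (0,1,k) * trans p q ps (0,1,k) (pol (0,1,k)) (0,1,Suc k))) SS"
  proof (rule has_sum_single)
    show "(0,1,k) \<in> SS" using k by (simp add: SS_def)
    fix s assume sS: "s \<in> SS" "s \<noteq> (0,1,k)"
    then show "g s * trans p q ps s (pol s) (0,1,Suc k) = 0" using trans_into_01[OF sS(1)] k by simp
  qed
  moreover have "trans p q ps (0,1,k) (pol (0,1,k)) (0,1,Suc k) = (if du \<le> k then (1 - p) * (1 - ps) else 1 - p)"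
    using k trans_into_01[OF SS_memI(4)[OF k]] by simp
  ultimately show ?thesis by simp
qed

end

context M begin

definition "n000 = (1 - p) * BB / DD"
definition "n110 = (1 - q) * AA / DD"

lemma den_nz: "1 - (1 - q) * (1 - ps) \<noteq> 0" "1 - (1 - p) * (1 - ps) \<noteq> 0" "1 - q \<noteq> 0" "1 - p \<noteq> 0" "p \<noteq> 0" "q \<noteq> 0" "ps \<noteq> 0"
  using r_facts p0 p1 q0 q1 ps0 by auto

lemma QA: "(1 - q) * AA = p / (1 - (1 - q) * (1 - ps))"
  unfolding AA_def using den_nz by simp

lemma h1: "q * a1 + ps * ((1 - q) * AA) = p"
proof -
  define R where "R = 1 - (1 - q) * (1 - ps)"
  have R0: "R \<noteq> 0" using den_nz unfolding R_def by simp
  have "q * a1 + ps * ((1 - q) * AA) = (q * (p * (1 - ps)) + ps * p) / R"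
    unfolding a1_def QA R_def[symmetric] by (simp add: add_divide_distrib)
  also have "q * (p * (1 - ps)) + ps * p = p * R" unfolding R_def by (simp add: algebra_simps)
  finally show ?thesis using R0 by simp
qed

lemma h2: "p + (1 - q) * a1 = (1 - q) * AA"
  unfolding a1_def QA using den_nz by (simp add: field_simps)

lemma h3: "(1 - p) * ps * BB + p * b1 = q"
proof -
  have pb: "p * b1 = q * (1 - (1 - p) ^ (du - 1)) + p * BB"
  proof -
    have "1 - (1 - p) = p" by simp
    then show ?thesis unfolding b1_def using den_nz by (simp add: distrib_left)
  qed
  have bb: "BB * (1 - (1 - p) * (1 - ps)) = q * (1 - p) ^ (du - 1)"
    unfolding BB_def using den_nz by simp
  have "(1 - p) * ps * BB + p * b1 = BB * (1 - (1 - p) * (1 - ps)) + q * (1 - (1 - p) ^ (du - 1))"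
    unfolding pb by (simp add: algebra_simps)
  also have "\<dots> = q" unfolding bb by (simp add: algebra_simps)
  finally show ?thesis .
qed

lemma alg1: "(1 + a1) * n000 + (1 + b1) * n110 = 1"
proof -
  have "(1 + a1) * n000 + (1 + b1) * n110 = ((1 + a1) * (1 - p) * BB + (1 + b1) * (1 - q) * AA) / DD"
    unfolding n000_def n110_def by (simp add: add_divide_distrib)
  also have "\<dots> = 1" using pos_facts by (simp add: DD_def[symmetric])
  finally show ?thesis .
qed

lemma key_ratio: "(1 - q) * AA * n000 = (1 - p) * BB * n110"
  unfolding n000_def n110_def by (simp add: field_simps)

lemma alg2: "(1 - p) * n000 + (q * a1 * n000 + (1 - p) * ps * BB * n110) = n000"
proof -
  have "(1 - p) * ps * BB * n110 = ps * ((1 - p) * BB * n110)" by (simp add: algebra_simps)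
  also have "\<dots> = ps * ((1 - q) * AA * n000)" by (simp only: key_ratio)
  finally have "q * a1 * n000 + (1 - p) * ps * BB * n110 = (q * a1 + ps * ((1 - q) * AA)) * n000"
    by (simp add: algebra_simps)
  also have "\<dots> = p * n000" by (simp only: h1)
  finally show ?thesis by (simp add: algebra_simps)
qed

lemma alg3: "p * ps * n000 + ((1 - q) * n110 + (a1 * n000 * ((1 - q) * ps) + b1 * n110 * p)) = n110"
proof -
  have "p * ps * n000 + a1 * n000 * ((1 - q) * ps) = ps * ((p + (1 - q) * a1) * n000)" by (simp add: algebra_simps)
  also have "\<dots> = ps * ((1 - q) * AA * n000)" by (simp only: h2)
  also have "\<dots> = ps * ((1 - p) * BB * n110)" by (simp only: key_ratio)
  finally have e: "p * ps * n000 + a1 * n000 * ((1 - q) * ps) = ps * ((1 - p) * BB * n110)" .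
  have "ps * ((1 - p) * BB * n110) + b1 * n110 * p = ((1 - p) * ps * BB + p * b1) * n110" by (simp add: algebra_simps)
  also have "\<dots> = q * n110" by (simp only: h3)
  finally have "ps * ((1 - p) * BB * n110) + b1 * n110 * p = q * n110" .
  with e show ?thesis by (simp add: algebra_simps)
qed

lemma nuf_10_step: "k \<ge> 1 \<Longrightarrow> nuf n0 n1 (1,0,Suc k) = nuf n0 n1 (1,0,k) * ((1 - q) * (1 - ps))"
  by (cases k) (auto simp: nuf_def)

lemma nuf_01_step: "k \<ge> 1 \<Longrightarrow> nuf n0 n1 (0,1,Suc k) = nuf n0 n1 (0,1,k) * (if du \<le> k then (1 - p) * (1 - ps) else 1 - p)"
proof -
  assume k: "k \<ge> 1"
  consider "Suc k \<le> du" | "k = du" | "k > du" by linarith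
  then show ?thesis
  proof cases
    case 1 then show ?thesis using k by (cases k) (auto simp: nuf_def)
  next
    case 2 then show ?thesis using k by (auto simp: nuf_def Suc_diff_le)
  next
    case 3 then show ?thesis using k by (auto simp: nuf_def Suc_diff_le)
  qed
qed

lemma nuf_nonneg: "0 \<le> n0 \<Longrightarrow> 0 \<le> n1 \<Longrightarrow> 0 \<le> nuf n0 n1 s"
  using p0 p1 q0 q1 ps0 ps1 by (auto simp: nuf_def split: prod.splits)

lemma n_pos: "0 < n000" "0 < n110"
  using pos_facts p1 q1 unfolding n000_def n110_def by auto

lemma stat_iff: "stationary p q ps pol \<nu> \<longleftrightarrow> (\<forall>s\<in>SS. \<nu> s = nuf n000 n110 s)"
proof
  assume st: "stationary p q ps pol \<nu>"
  have nn: "\<forall>s\<in>SS. \<nu> s \<ge> 0" and tot: "(\<nu> has_sum 1) SS"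
    and bal: "\<And>s'. s' \<in> SS \<Longrightarrow> ((\<lambda>s. \<nu> s * trans p q ps s (pol s) s') has_sum \<nu> s') SS"
    using st unfolding stationary_def by auto
  define n0 where "n0 = \<nu> (0,0,0)"
  define n1 where "n1 = \<nu> (1,1,0)"
  have e10: "\<nu> (1,0,k) = nuf n0 n1 (1,0,k)" if "k \<ge> 1" for k
    using that
  proof (induction k rule: dec_induct)
    case base
    have "\<nu> (1,0,1) = \<nu> (0,0,0) * (p * (1 - ps))"
      using has_sum_unique[OF bal[of "(1,0,1)"] pred_10_1] by (simp add: SS_def)
    then show ?case by (simp add: nuf_def n0_def)
  next
    case (step k)
    have "\<nu> (1,0,Suc k) = \<nu> (1,0,k) * ((1 - q) * (1 - ps))"
      using has_sum_unique[OF bal[of "(1,0,Suc k)"] pred_10[OF step(1)]] by (simp add: SS_def)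
    then show ?case using step nuf_10_step by simp
  qed
  have e01: "\<nu> (0,1,k) = nuf n0 n1 (0,1,k)" if "k \<ge> 1" for k
    using that
  proof (induction k rule: dec_induct)
    case base
    have "\<nu> (0,1,1) = \<nu> (1,1,0) * q"
      using has_sum_unique[OF bal[of "(0,1,1)"] pred_01_1] by (simp add: SS_def)
    then show ?case using du1 by (simp add: nuf_def n1_def)
  next
    case (step k)
    have "\<nu> (0,1,Suc k) = \<nu> (0,1,k) * (if du \<le> k then (1 - p) * (1 - ps) else 1 - p)"
      using has_sum_unique[OF bal[of "(0,1,Suc k)"] pred_01[OF step(1)]] by (simp add: SS_def)
    then show ?case using step nuf_01_step by simp
  qed
  have eq: "\<nu> s = nuf n0 n1 s" if "s \<in> SS" for s
    using that
  proof (rule SS_cases)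
    assume "s = (0,0,0)" then show ?thesis by (simp add: n0_def nuf_def)
  next
    assume "s = (1,1,0)" then show ?thesis by (simp add: n1_def nuf_def)
  next
    fix d assume "d \<ge> 1" "s = (1,0,d)" then show ?thesis using e10[of d] by simp
  next
    fix d assume "d \<ge> 1" "s = (0,1,d)" then show ?thesis using e01[of d] by simp
  qed
  have "(\<nu> has_sum 1) SS = (nuf n0 n1 has_sum 1) SS" by (rule has_sum_cong) (rule eq)
  then have "(nuf n0 n1 has_sum 1) SS" using tot by simp
  then have N: "(1 + a1) * n0 + (1 + b1) * n1 = 1" using has_sum_unique[OF sum_nuf[of n0 n1]] by simp
  have b0: "((\<lambda>s. \<nu> s * trans p q ps s (pol s) (0,0,0)) has_sum n0) SS"
    using bal[of "(0,0,0)"] unfolding n0_def by (simp add: SS_def)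
  have "((\<lambda>s. \<nu> s * trans p q ps s (pol s) (0,0,0)) has_sum n0) SS =
     ((\<lambda>s. nuf n0 n1 s * trans p q ps s (pol s) (0,0,0)) has_sum n0) SS"
    by (rule has_sum_cong) (simp add: eq)
  then have "((\<lambda>s. nuf n0 n1 s * trans p q ps s (pol s) (0,0,0)) has_sum n0) SS" using b0 by simp
  then have Z: "(1 - p) * n0 + (q * a1 * n0 + (1 - p) * ps * BB * n1) = n0"
    using has_sum_unique[OF bal_000[of n0 n1]] by simp
  have "ps * ((1 - q) * AA * n0) = ps * ((1 - p) * BB * n1)"
  proof -
    have "ps * ((1 - q) * AA * n0) = (q * a1 + ps * ((1 - q) * AA)) * n0 - q * a1 * n0" by (simp add: algebra_simps)
    also have "\<dots> = p * n0 - q * a1 * n0" by (simp add: h1)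
    also have "\<dots> = ps * ((1 - p) * BB * n1)" using Z by (simp add: algebra_simps)
    finally show ?thesis .
  qed
  then have R: "(1 - q) * AA * n0 = (1 - p) * BB * n1" using ps0 by simp
  have "n1 * DD = (1 - q) * AA"
  proof -
    have "(1 - q) * AA = (1 - q) * AA * ((1 + a1) * n0 + (1 + b1) * n1)" using N by simp
    also have "\<dots> = (1 + a1) * ((1 - q) * AA * n0) + (1 + b1) * (1 - q) * AA * n1" by (simp add: algebra_simps)
    also have "\<dots> = n1 * DD" unfolding R DD_def by (simp add: algebra_simps)
    finally show ?thesis by simp
  qed
  then have n1v: "n1 = n110" using pos_facts unfolding n110_def by (simp add: field_simps)
  then have "(1 - q) * AA * n0 = (1 - q) * AA * n000" using R key_ratio by simp
  then have n0v: "n0 = n000" using pos_facts q1 by simp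
  show "\<forall>s\<in>SS. \<nu> s = nuf n000 n110 s" using eq n0v n1v by simp
next
  assume eq: "\<forall>s\<in>SS. \<nu> s = nuf n000 n110 s"
  have nn: "\<forall>s\<in>SS. \<nu> s \<ge> 0" using eq nuf_nonneg n_pos by simp
  have tot: "(\<nu> has_sum 1) SS"
    using sum_nuf[of n000 n110] alg1 has_sum_cong[of SS \<nu> "nuf n000 n110"] eq by simp
  have bal: "((\<lambda>s. \<nu> s * trans p q ps s (pol s) s') has_sum \<nu> s') SS" if s': "s' \<in> SS" for s'
  proof -
    have cong: "((\<lambda>s. \<nu> s * trans p q ps s (pol s) s') has_sum v) SS \<longleftrightarrow>
       ((\<lambda>s. nuf n000 n110 s * trans p q ps s (pol s) s') has_sum v) SS" for v
      by (rule has_sum_cong) (simp add: eq)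
    from s' show ?thesis
    proof (rule SS_cases)
      assume "s' = (0,0,0)"
      then show ?thesis using cong bal_000[of n000 n110] alg2 eq by (simp add: SS_def nuf_def)
    next
      assume "s' = (1,1,0)"
      then show ?thesis using cong bal_110[of n000 n110] alg3 eq by (simp add: SS_def nuf_def)
    next
      fix d assume d: "d \<ge> 1" "s' = (1,0,d)"
      then obtain k where k: "d = Suc k" by (cases d) auto
      show ?thesis
      proof (cases "k = 0")
        case True
        have v0: "\<nu> (0,0,0) = n000" using eq[rule_format, of "(0,0,0)"] by (simp add: SS_def nuf_def)
        have v1: "\<nu> (1,0,1) = n000 * (p * (1 - ps))" using eq[rule_format, of "(1,0,1)"] by (simp add: SS_def nuf_def)
        have "((\<lambda>s. \<nu> s * trans p q ps s (pol s) (1,0,1)) has_sum \<nu> (1,0,1)) SS"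
          using pred_10_1[of \<nu>] unfolding v0 v1 .
        with d k True show ?thesis by simp
      next
        case False
        then have k1: "k \<ge> 1" by simp
        have "\<nu> (1,0,k) * ((1 - q) * (1 - ps)) = \<nu> (1,0,Suc k)"
          using eq k1 nuf_10_step[OF k1, of n000 n110] by (simp add: SS_def)
        then show ?thesis using d k pred_10[OF k1, of \<nu>] by simp
      qed
    next
      fix d assume d: "d \<ge> 1" "s' = (0,1,d)"
      then obtain k where k: "d = Suc k" by (cases d) auto
      show ?thesis
      proof (cases "k = 0")
        case True
        have v0: "\<nu> (1,1,0) = n110" using eq[rule_format, of "(1,1,0)"] by (simp add: SS_def nuf_def)
        have v1: "\<nu> (0,1,1) = n110 * q" using eq[rule_format, of "(0,1,1)"] du1 by (simp add: SS_def nuf_def)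
        have "((\<lambda>s. \<nu> s * trans p q ps s (pol s) (0,1,1)) has_sum \<nu> (0,1,1)) SS"
          using pred_01_1[of \<nu>] unfolding v0 v1 .
        with d k True show ?thesis by simp
      next
        case False
        then have k1: "k \<ge> 1" by simp
        have "\<nu> (0,1,k) * (if du \<le> k then (1 - p) * (1 - ps) else 1 - p) = \<nu> (0,1,Suc k)"
          using eq k1 nuf_01_step[OF k1, of n000 n110] by (simp add: SS_def)
        then show ?thesis using d k pred_01[OF k1, of \<nu>] by simp
      qed
    qed
  qed
  show "stationary p q ps pol \<nu>" unfolding stationary_def using nn tot bal by auto
qed

end

locale M2 = M + fixes \<beta> lam :: real
begin

definition "GG = \<beta> * p * (1 - ps) * n000 / (1 - (1 - q) * (1 - ps))^2 + (1 - \<beta>) * q * psi (1 - ps) (1 - p) du * n110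
                    + lam * ((1 + a1) * n000 + BB * n110)"
definition "gam = (1 - q) * (1 - ps) * \<beta> / (1 - (1 - q) * (1 - ps))"
definition "FF = \<beta> * p * (1 - ps) + lam + p * (1 - ps) * ((1 - q) * (1 - ps) * \<beta> + gam + lam) / (1 - (1 - q) * (1 - ps))"
definition "uu = (GG * (1 - (1 - q) * (1 - ps) + p * (1 - ps)) - FF * (1 - (1 - q) * (1 - ps))) / (p * ps)"
definition "al = ((1 - q) * (1 - ps) * \<beta> + (1 - q) * (1 - ps) * gam + lam + (1 - q) * ps * uu - GG) / (1 - (1 - q) * (1 - ps))"
definition "gam' = (1 - p) * (1 - ps) * (1 - \<beta>) / (1 - (1 - p) * (1 - ps))"
definition "al' = ((1 - p) * (1 - ps) * (1 - \<beta>) + (1 - p) * (1 - ps) * gam' + lam + p * uu - GG) / (1 - (1 - p) * (1 - ps))"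
definition "bb = (1 - p) * (1 - \<beta>) / p"
definition "aa = (bb + p * uu - GG) / p"
definition "KK = (al' + gam' * real du - aa - bb * real du) * (1 - p) ^ du"
definition "h01 d = (if d \<le> du then aa + bb * real d + KK / (1 - p) ^ d else al' + gam' * real d)"
definition "hh s = (case s of (x, xh, d) \<Rightarrow>
   if x = 1 \<and> xh = 0 then al + gam * real d else if x = 0 \<and> xh = 1 then h01 d else if x = 1 then uu else 0)"

lemma wst_eq: "s \<in> SS \<Longrightarrow> stage_cost p q ps \<beta> lam s (pol s) = Pop p q ps (pol s) s (cst \<beta>) + lam * (if pol s then 1 else 0)"
  unfolding stage_cost_def using trans_has_sum[of s p q ps "pol s" "cst \<beta>"] by (simp add: infsumI)

lemma h01_hi: "d \<ge> du \<Longrightarrow> h01 d = al' + gam' * real d"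
proof -
  assume d: "d \<ge> du"
  show ?thesis
  proof (cases "d = du")
    case True
    have "(1 - p) ^ du \<noteq> 0" using p1 by simp
    then show ?thesis using True unfolding h01_def KK_def by simp
  next
    case False then show ?thesis using d unfolding h01_def by simp
  qed
qed

lemma A000: "p * (1 - ps) * \<beta> + lam = GG - p * (ps * uu + (1 - ps) * (al + gam))"
proof -
  define r where "r = (1 - q) * (1 - ps)"
  define i where "i = 1 / (1 - r)"
  define j where "j = 1 / (p * ps)"
  have ei: "(1 - r) * i = 1" unfolding i_def r_def using den_nz by simp
  have ej: "(p * ps) * j = 1" unfolding j_def using den_nz by simp
  have g: "gam = r * \<beta> * i" unfolding gam_def i_def r_def by simp
  have f: "FF = \<beta> * p * (1 - ps) + lam + p * (1 - ps) * (r * \<beta> + gam + lam) * i" unfolding FF_def i_def r_def by simp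
  have u: "uu = (GG * (1 - r + p * (1 - ps)) - FF * (1 - r)) * j" unfolding uu_def j_def r_def by simp
  have a: "al = (r * \<beta> + r * gam + lam + (1 - q) * ps * uu - GG) * i" unfolding al_def i_def r_def by simp
  show ?thesis unfolding a u f g using ei ej unfolding r_def by algebra
qed

lemma A10: "(1 - q) * ((1 - ps) * (\<beta> * (real d + 1))) + lam = GG + (al + gam * real d) - (1 - q) * (ps * uu + (1 - ps) * (al + gam * (real d + 1)))"
proof -
  define r where "r = (1 - q) * (1 - ps)"
  define i where "i = 1 / (1 - r)"
  have ei: "(1 - r) * i = 1" unfolding i_def r_def using den_nz by simp
  have g: "gam = r * \<beta> * i" unfolding gam_def i_def r_def by simp
  have a: "al = (r * \<beta> + r * gam + lam + (1 - q) * ps * uu - GG) * i" unfolding al_def i_def r_def by simp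
  show ?thesis unfolding a g using ei unfolding r_def by algebra
qed

lemma A01hi: "(1 - p) * ((1 - ps) * ((1 - \<beta>) * (real d + 1))) + lam = GG + (al' + gam' * real d) - ((1 - p) * ((1 - ps) * (al' + gam' * (real d + 1))) + p * uu)"
proof -
  define r where "r = (1 - p) * (1 - ps)"
  define i where "i = 1 / (1 - r)"
  have ei: "(1 - r) * i = 1" unfolding i_def r_def using den_nz by simp
  have g: "gam' = r * (1 - \<beta>) * i" unfolding gam'_def i_def r_def by simp
  have a: "al' = (r * (1 - \<beta>) + r * gam' + lam + p * uu - GG) * i" unfolding al'_def i_def r_def by simp
  show ?thesis unfolding a g using ei unfolding r_def by algebra
qed

lemma A01lo: "d + 1 \<le> du \<Longrightarrow> (1 - p) * ((1 - \<beta>) * (real d + 1)) = GG + h01 d - ((1 - p) * h01 (Suc d) + p * uu)"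
proof -
  assume d: "d + 1 \<le> du"
  define z where "z = KK / (1 - p) ^ Suc d"
  define j where "j = 1 / p"
  have ej: "p * j = 1" unfolding j_def using den_nz by simp
  have hd: "h01 d = aa + bb * real d + (1 - p) * z" unfolding h01_def z_def using d den_nz by (simp add: field_simps)
  have hs: "h01 (Suc d) = aa + bb * (real d + 1) + z" unfolding h01_def z_def using d by simp
  have b: "bb = (1 - p) * (1 - \<beta>) * j" unfolding bb_def j_def by simp
  have a: "aa = (bb + p * uu - GG) * j" unfolding aa_def j_def by simp
  show ?thesis unfolding hd hs a b using ej by algebra
qed

lemma A110: "q * (1 - \<beta>) = GG + uu - q * h01 1 - (1 - q) * uu"
proof -
  have X: "KK / (1 - p) = (al' + gam' * real du - aa - bb * real du) * (1 - p) ^ (du - 1)"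
  proof -
    have "(1 - p) ^ du = (1 - p) * (1 - p) ^ (du - 1)" using du1 by (cases du) auto
    then show ?thesis unfolding KK_def using den_nz by simp
  qed
  have h1: "h01 1 = aa + bb + (al' + gam' * real du - aa - bb * real du) * (1 - p) ^ (du - 1)"
    unfolding h01_def using du1 X by simp
  have D0: "DD \<noteq> 0" using pos_facts by simp
  show ?thesis unfolding h1
    by (rule key_alg[OF p0 p1 q0 q1 ps0 ps1 den_nz(1,2) a1_def AA_def BB_def b1_def DD_def D0 n000_def n110_def
       psi_def GG_def gam_def FF_def uu_def gam'_def al'_def bb_def aa_def])
qed

lemma poisson: "s \<in> SS \<Longrightarrow> stage_cost p q ps \<beta> lam s (pol s) = GG + hh s - Pop p q ps (pol s) s hh"
proof -
  assume sS: "s \<in> SS"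
  note w = wst_eq[OF sS]
  from sS show ?thesis
proof (rule SS_cases)
  assume s: "s = (0,0,0)"
  have "stage_cost p q ps \<beta> lam s (pol s) = p * (1 - ps) * \<beta> + lam"
    using s using w by (simp add: Pop_def src_def age_upd_def switching_def cst_def)
  moreover have "GG + hh s - Pop p q ps (pol s) s hh = GG - p * (ps * uu + (1 - ps) * (al + gam))"
    using s by (simp add: Pop_def src_def age_upd_def switching_def hh_def)
  ultimately show ?thesis using A000 by simp
next
  assume s: "s = (1,1,0)"
  have "stage_cost p q ps \<beta> lam s (pol s) = q * (1 - \<beta>)"
    using s du1 using w by (simp add: Pop_def src_def age_upd_def switching_def cst_def)
  moreover have "GG + hh s - Pop p q ps (pol s) s hh = GG + uu - q * h01 1 - (1 - q) * uu"
    using s du1 by (simp add: Pop_def src_def age_upd_def switching_def hh_def)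
  ultimately show ?thesis using A110 by simp
next
  fix d assume d: "1 \<le> d" "s = (1,0,d)"
  have "stage_cost p q ps \<beta> lam s (pol s) = (1 - q) * ((1 - ps) * (\<beta> * (real d + 1))) + lam"
    using d using w by (simp add: Pop_def src_def age_upd_def switching_def cst_def)
  moreover have "GG + hh s - Pop p q ps (pol s) s hh = GG + (al + gam * real d) - (1 - q) * (ps * uu + (1 - ps) * (al + gam * (real d + 1)))"
    using d by (simp add: Pop_def src_def age_upd_def switching_def hh_def)
  ultimately show ?thesis using A10 by simp
next
  fix d assume d: "1 \<le> d" "s = (0,1,d)"
  show ?thesis
  proof (cases "du \<le> d")
    case True
    have "stage_cost p q ps \<beta> lam s (pol s) = (1 - p) * ((1 - ps) * ((1 - \<beta>) * (real d + 1))) + lam"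
      using d True using w by (simp add: Pop_def src_def age_upd_def switching_def cst_def)
    moreover have "GG + hh s - Pop p q ps (pol s) s hh = GG + (al' + gam' * real d) - ((1 - p) * ((1 - ps) * (al' + gam' * (real d + 1))) + p * uu)"
      using d True h01_hi[of d] h01_hi[of "Suc d"] by (simp add: Pop_def src_def age_upd_def switching_def hh_def algebra_simps)
    ultimately show ?thesis using A01hi by simp
  next
    case False
    have "stage_cost p q ps \<beta> lam s (pol s) = (1 - p) * ((1 - \<beta>) * (real d + 1))"
      using d False using w by (simp add: Pop_def src_def age_upd_def switching_def cst_def)
    moreover have "GG + hh s - Pop p q ps (pol s) s hh = GG + h01 d - ((1 - p) * h01 (Suc d) + p * uu)"
      using d False by (simp add: Pop_def src_def age_upd_def switching_def hh_def)
    ultimately show ?thesis using A01lo[of d] False by simp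
  qed
qed
qed

end

context M2 begin

definition "C1 = \<bar>al\<bar> + \<bar>aa\<bar> + \<bar>KK\<bar> / (1 - p) ^ du + \<bar>al'\<bar> + \<bar>uu\<bar>"
definition "C2 = \<bar>gam\<bar> + \<bar>bb\<bar> + \<bar>gam'\<bar>"

lemma C_nonneg: "0 \<le> C1" "0 \<le> C2"
  using p1 unfolding C1_def C2_def by auto

lemma hh_bound: "s \<in> SS \<Longrightarrow> \<bar>hh s\<bar> \<le> C1 + C2 * real (age s)"
proof (erule SS_cases)
  assume "s = (0,0,0)" then show ?thesis using C_nonneg by (simp add: hh_def age_def)
next
  assume "s = (1,1,0)" then show ?thesis using C_nonneg p1 by (simp add: hh_def age_def C1_def)
next
  fix d assume d: "1 \<le> d" "s = (1,0,d)"
  have "\<bar>al + gam * real d\<bar> \<le> \<bar>al\<bar> + \<bar>gam * real d\<bar>" by (rule abs_triangle_ineq)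
  also have "\<bar>al\<bar> + \<bar>gam * real d\<bar> = \<bar>al\<bar> + \<bar>gam\<bar> * real d" by (simp add: abs_mult)
  also have "\<dots> \<le> C1 + C2 * real d"
  proof (rule add_mono)
    show "\<bar>al\<bar> \<le> C1" using p1 unfolding C1_def by auto
    show "\<bar>gam\<bar> * real d \<le> C2 * real d" unfolding C2_def by (rule mult_right_mono) auto
  qed
  finally show ?thesis using d by (simp add: hh_def age_def)
next
  fix d assume d: "1 \<le> d" "s = (0,1,d)"
  show ?thesis
  proof (cases "d \<le> du")
    case True
    have pp: "0 < (1 - p) ^ d" "0 < (1 - p) ^ du" using p1 by auto
    have "(1 - p) ^ du \<le> (1 - p) ^ d" using True p0 p1 by (intro power_decreasing) auto
    then have k: "\<bar>KK\<bar> / (1 - p) ^ d \<le> \<bar>KK\<bar> / (1 - p) ^ du" using pp by (intro divide_left_mono) auto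
    have e: "h01 d = aa + bb * real d + KK / (1 - p) ^ d" unfolding h01_def using True by simp
    have "\<bar>h01 d\<bar> \<le> \<bar>aa\<bar> + \<bar>bb * real d\<bar> + \<bar>KK / (1 - p) ^ d\<bar>"
      unfolding e by (rule order_trans[OF abs_triangle_ineq add_right_mono[OF abs_triangle_ineq]])
    also have "\<bar>aa\<bar> + \<bar>bb * real d\<bar> + \<bar>KK / (1 - p) ^ d\<bar> = \<bar>aa\<bar> + \<bar>bb\<bar> * real d + \<bar>KK\<bar> / (1 - p) ^ d"
      using pp by (simp add: abs_mult abs_divide)
    also have "\<dots> \<le> C1 + C2 * real d"
    proof -
      have "\<bar>aa\<bar> + \<bar>KK\<bar> / (1 - p) ^ d \<le> C1" using k C_nonneg p1 unfolding C1_def by auto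
      moreover have "\<bar>bb\<bar> * real d \<le> C2 * real d" unfolding C2_def by (rule mult_right_mono) auto
      ultimately show ?thesis by linarith
    qed
    finally show ?thesis using d by (simp add: hh_def age_def)
  next
    case False
    have e: "h01 d = al' + gam' * real d" unfolding h01_def using False by simp
    have "\<bar>h01 d\<bar> \<le> \<bar>al'\<bar> + \<bar>gam' * real d\<bar>" unfolding e by (rule abs_triangle_ineq)
    also have "\<bar>al'\<bar> + \<bar>gam' * real d\<bar> = \<bar>al'\<bar> + \<bar>gam'\<bar> * real d" by (simp add: abs_mult)
    also have "\<dots> \<le> C1 + C2 * real d"
    proof (rule add_mono)
      show "\<bar>al'\<bar> \<le> C1" using p1 unfolding C1_def by auto
      show "\<bar>gam'\<bar> * real d \<le> C2 * real d" unfolding C2_def by (rule mult_right_mono) auto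
    qed
    finally show ?thesis using d by (simp add: hh_def age_def)
  qed
qed

definition "Mb = C1 + C2 / (1 - rho)"

lemma E_hh_bound: "\<bar>E n hh\<bar> \<le> Mb"
proof -
  have "\<bar>E n hh\<bar> \<le> E n (\<lambda>s. \<bar>hh s\<bar>)" by (rule E_abs)
  also have "\<dots> \<le> E n (\<lambda>s. C1 + C2 * real (age s))" by (rule E_mono) (rule hh_bound)
  also have "\<dots> = C1 + C2 * E n (\<lambda>s. real (age s))"
    using E_add[of n "\<lambda>_. C1" "\<lambda>s. C2 * real (age s)"] E_cmult[of n C1 "\<lambda>_. 1"] E_cmult[of n C2] E_one[of n] by simp
  also have "\<dots> \<le> C1 + C2 * (1 / (1 - rho))" using mult_left_mono[OF E_age C_nonneg(2)] by simp
  finally show ?thesis by (simp add: Mb_def)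
qed

lemma E_const: "E n (\<lambda>_. c) = c"
  using E_cmult[of n c "\<lambda>_. 1"] E_one[of n] by simp

lemma E_w: "E n (\<lambda>s. stage_cost p q ps \<beta> lam s (pol s)) = GG + E n hh - E (Suc n) hh"
proof -
  have "E n (\<lambda>s. stage_cost p q ps \<beta> lam s (pol s)) = E n (\<lambda>s. (GG + hh s) - Pop p q ps (pol s) s hh)"
    by (rule E_cong) (simp add: poisson)
  also have "\<dots> = E n (\<lambda>s. GG + hh s) - E n (\<lambda>s. Pop p q ps (pol s) s hh)" by (rule E_diff)
  also have "\<dots> = GG + E n hh - E (Suc n) hh" by (simp add: E_add E_const E_step)
  finally show ?thesis .
qed

lemma sum_w: "(\<Sum>t=1..T. E (t - 1) (\<lambda>s. stage_cost p q ps \<beta> lam s (pol s))) = real T * GG + E 0 hh - E T hh"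
proof (induction T)
  case 0 then show ?case by simp
next
  case (Suc T)
  then show ?case by (simp add: E_w algebra_simps)
qed

lemma avg_limit: "avg_cost p q ps \<beta> lam pol = ereal GG"
proof -
  define f where "f T = (1 / real T) * (\<Sum>t=1..T. \<Sum>\<^sub>\<infinity>s\<in>SS. state_dist p q ps pol (t - 1) s * stage_cost p q ps \<beta> lam s (pol s))" for T
  have fT: "f T = GG + (E 0 hh - E T hh) / real T" if "T \<ge> 1" for T
  proof -
    have "f T = (1 / real T) * (real T * GG + E 0 hh - E T hh)"
      unfolding f_def infsum_E sum_w ..
    then show ?thesis using that by (simp add: field_simps)
  qed
  have z: "(\<lambda>T. (E 0 hh - E T hh) / real T) \<longlonglongrightarrow> 0"
  proof (rule Lim_null_comparison)
    show "\<forall>\<^sub>F T in sequentially. norm ((E 0 hh - E T hh) / real T) \<le> (2 * Mb) / real T"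
    proof (rule eventually_sequentiallyI[of 1])
      fix T :: nat assume "1 \<le> T"
      have "\<bar>E 0 hh - E T hh\<bar> \<le> 2 * Mb" using E_hh_bound[of 0] E_hh_bound[of T] by linarith
      then show "norm ((E 0 hh - E T hh) / real T) \<le> (2 * Mb) / real T"
        by (simp add: abs_divide divide_right_mono)
    qed
    show "(\<lambda>T. 2 * Mb / real T) \<longlonglongrightarrow> 0" by (rule lim_const_over_n)
  qed
  have "(\<lambda>T. GG + (E 0 hh - E T hh) / real T) \<longlonglongrightarrow> GG + 0" by (intro tendsto_add tendsto_const z)
  then have "f \<longlonglongrightarrow> GG"
    by (subst tendsto_cong[where g="\<lambda>T. GG + (E 0 hh - E T hh) / real T"]) (auto intro: eventually_sequentiallyI[of 1] simp: fT)
  then have "(\<lambda>T. ereal (f T)) \<longlonglongrightarrow> ereal GG" by (rule tendsto_ereal)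
  then have "limsup (\<lambda>T. ereal (f T)) = ereal GG" by (intro lim_imp_Limsup) simp_all
  then show ?thesis unfolding avg_cost_def f_def .
qed

end

theorem lemma1:
  fixes p q ps \<beta> lam :: real and du :: nat
    and pf a1 A B b1 D n000 n110 :: real and nu :: "state \<Rightarrow> real"
  assumes "0 < p" "p < 1" "0 < q" "q < 1" "0 < ps" "ps \<le> 1"
    and "0 \<le> \<beta>" "\<beta> \<le> 1" "0 \<le> lam" "1 \<le> du"
  defines "pf \<equiv> 1 - ps"
    and "a1 \<equiv> p * pf / (1 - (1 - q) * pf)"
    and "A \<equiv> p / ((1 - q) * (1 - (1 - q) * pf))"
    and "B \<equiv> q * (1 - p) ^ (du - 1) / (1 - (1 - p) * pf)"
    and "b1 \<equiv> q * (1 - (1 - p) ^ (du - 1)) / (1 - (1 - p)) + B"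
    and "D \<equiv> (1 + a1) * (1 - p) * B + (1 + b1) * (1 - q) * A"
    and "n000 \<equiv> (1 - p) * B / D"
    and "n110 \<equiv> (1 - q) * A / D"
    and "nu \<equiv> (\<lambda>(x, xh, k).
           if (x, xh, k) = (0, 0, 0) then n000
           else if (x, xh, k) = (1, 1, 0) then n110
           else if x = 1 \<and> xh = 0 then p * pf * ((1 - q) * pf) ^ (k - 1) * n000
           else if x = 0 \<and> xh = 1 then
             (if k \<le> du then q * (1 - p) ^ (k - 1) * n110
              else q * (1 - p) ^ (du - 1) * ((1 - p) * pf) ^ (k - du) * n110)
           else 0)"
  shows "(\<forall>\<nu>. stationary p q ps (switching 0 du) \<nu> \<longleftrightarrow>
             (\<forall>s\<in>SS. \<nu> s = nu s))
         \<and> avg_cost p q ps \<beta> lam (switching 0 du) =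
             ereal (\<beta> * p * pf * n000 / (1 - (1 - q) * pf)^2
                    + (1 - \<beta>) * q * psi pf (1 - p) du * n110
                    + lam * ((1 + a1) * n000 + B * n110))"
proof -
  interpret X: M2 p q ps du \<beta> lam
    by unfold_locales (use \<open>0 < p\<close> \<open>p < 1\<close> \<open>0 < q\<close> \<open>q < 1\<close> \<open>0 < ps\<close> \<open>ps \<le> 1\<close> \<open>1 \<le> du\<close> in auto)
  note d = \<open>pf \<equiv> 1 - ps\<close> \<open>a1 \<equiv> p * pf / (1 - (1 - q) * pf)\<close>
    \<open>A \<equiv> p / ((1 - q) * (1 - (1 - q) * pf))\<close>
    \<open>B \<equiv> q * (1 - p) ^ (du - 1) / (1 - (1 - p) * pf)\<close>
    \<open>b1 \<equiv> q * (1 - (1 - p) ^ (du - 1)) / (1 - (1 - p)) + B\<close>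
    \<open>D \<equiv> (1 + a1) * (1 - p) * B + (1 + b1) * (1 - q) * A\<close>
    \<open>n000 \<equiv> (1 - p) * B / D\<close>
    \<open>n110 \<equiv> (1 - q) * A / D\<close>
  have e1: "nu = M.nuf p q ps du (M.n000 p q ps du) (M.n110 p q ps du)"
    unfolding \<open>nu \<equiv> _\<close> X.nuf_def X.n000_def X.n110_def X.DD_def X.b1_def X.BB_def X.AA_def X.a1_def d ..
  have e2: "\<beta> * p * pf * n000 / (1 - (1 - q) * pf)^2
                    + (1 - \<beta>) * q * psi pf (1 - p) du * n110
                    + lam * ((1 + a1) * n000 + B * n110) = M2.GG p q ps du \<beta> lam"
    unfolding X.GG_def X.n000_def X.n110_def X.DD_def X.b1_def X.BB_def X.AA_def X.a1_def d ..
  show ?thesis unfolding e1 e2 using X.stat_iff X.avg_limit by simp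
qed

end
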